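(* Let $K_{1,n}$ be the star with $n\geq 3$ leaves and let $p\geq 2$ be an integer. Then $C_{p,1}^T(K_{1,n})\leq n+2p-1$.
   Context: For an integer $p$, a $(p,1)$-total labelling of a graph $G$ is a function $c$ from $V(G)\cup E(G)$ to the nonnegative integers such that $c(u)\neq c(v)$ whenever $uv\in E(G)$, $c(e)\neq c(e')$ whenever $e,e'$ are distinct edges sharing an endpoint, and $|c(u)-c(e)|\geq p$ whenever vertex $u$ is incident to edge $e$. A list assignment $L$ assigns to every $x\in V(G)\cup E(G)$ a set $L(x)$ of nonnegative integers; $G$ is $L$-$(p,1)$-total labelable if it has a $(p,1)$-total labelling $c$ with $c(x)\in L(x)$ for all $x$. The $(p,1)$-total labelling choosability $C_{p,1}^T(G)$ is the minimum $k$ such that $G$ is $L$-$(p,1)$-total labelable for every list assignment $L$ with $|L(x)|=k$ for all $x\in V(G)\cup E(G)$. *)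

theory Defs
  imports Main
begin

text \<open>A simple graph is given by a vertex set V and a set E of edges, each edge a
  2-element subset of V. Elements of V \<union> E are represented by the datatype below.\<close>

datatype 'a elem = Vx 'a | Ed "'a set"

definition elems :: "'a set \<Rightarrow> 'a set set \<Rightarrow> 'a elem set" where
  "elems V E = Vx ` V \<union> Ed ` E"

definition total_labelling :: "nat \<Rightarrow> 'a set \<Rightarrow> 'a set set \<Rightarrow> ('a elem \<Rightarrow> nat) \<Rightarrow> bool" where
  "total_labelling p V E c \<longleftrightarrow>
     (\<forall>u v. {u, v} \<in> E \<longrightarrow> c (Vx u) \<noteq> c (Vx v)) \<and>
     (\<forall>e\<in>E. \<forall>e'\<in>E. e \<noteq> e' \<and> e \<inter> e' \<noteq> {} \<longrightarrow> c (Ed e) \<noteq> c (Ed e')) \<and>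
     (\<forall>e\<in>E. \<forall>u\<in>e. \<bar>int (c (Vx u)) - int (c (Ed e))\<bar> \<ge> int p)"

definition L_labelable :: "nat \<Rightarrow> 'a set \<Rightarrow> 'a set set \<Rightarrow> ('a elem \<Rightarrow> nat set) \<Rightarrow> bool" where
  "L_labelable p V E L \<longleftrightarrow>
     (\<exists>c. total_labelling p V E c \<and> (\<forall>x\<in>elems V E. c x \<in> L x))"

definition total_choosable :: "nat \<Rightarrow> 'a set \<Rightarrow> 'a set set \<Rightarrow> nat \<Rightarrow> bool" where
  "total_choosable p V E k \<longleftrightarrow>
     (\<forall>L. (\<forall>x\<in>elems V E. finite (L x) \<and> card (L x) = k) \<longrightarrow> L_labelable p V E L)"

definition total_choosability :: "nat \<Rightarrow> 'a set \<Rightarrow> 'a set set \<Rightarrow> nat" where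
  "total_choosability p V E = (LEAST k. total_choosable p V E k)"

definition star_V :: "nat \<Rightarrow> nat set" where
  "star_V n = {0..n}"

definition star_E :: "nat \<Rightarrow> nat set set" where
  "star_E n = {{0, i} | i. 1 \<le> i \<and> i \<le> n}"

end

theory Submission
  imports Defs
begin

lemma greedy:
  fixes A :: "nat \<Rightarrow> nat set"
  assumes A: "\<forall>i\<in>{1..n}. finite (A i) \<and> card (A i) \<ge> n"
  shows "m \<le> n \<Longrightarrow> \<exists>f. (\<forall>i\<in>{1..m}. f i \<in> A i) \<and> inj_on f {1..m}"
proof (induction m)
  case 0
  then show ?case by auto
next
  case (Suc m)
  then obtain f where f: "\<forall>i\<in>{1..m}. f i \<in> A i" "inj_on f {1..m}" by auto
  have fin: "finite (A (Suc m))" and c: "card (A (Suc m)) \<ge> n" using A Suc.prems by auto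
  have cf: "card (f ` {1..m}) \<le> m" using card_image_le[of "{1..m}" f] by simp
  have d: "card (A (Suc m)) - card (f ` {1..m}) \<le> card (A (Suc m) - f ` {1..m})"
    by (rule diff_card_le_card_Diff) simp
  have "m < n" using Suc.prems by simp
  hence "card (A (Suc m) - f ` {1..m}) > 0" using c cf d by linarith
  hence "A (Suc m) - f ` {1..m} \<noteq> {}" by (simp add: card_gt_0_iff)
  then obtain x where x: "x \<in> A (Suc m)" "x \<notin> f ` {1..m}" by auto
  let ?g = "f(Suc m := x)"
  have "\<forall>i\<in>{1..Suc m}. ?g i \<in> A i" using f x by auto
  moreover have "inj_on ?g {1..Suc m}"
  proof -
    have e: "{1..Suc m} = insert (Suc m) {1..m}" by auto
    have "inj_on ?g {1..m} = inj_on f {1..m}" by (rule inj_on_cong) simp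
    hence "inj_on ?g {1..m}" using f(2) by simp
    moreover have "?g (Suc m) \<notin> ?g ` ({1..m} - {Suc m})" using x by auto
    ultimately show ?thesis unfolding e by (simp add: inj_on_insert)
  qed
  ultimately show ?case by blast
qed

definition W :: "nat \<Rightarrow> nat \<Rightarrow> nat set" where
  "W p c = {c - (p - 1) .. c + (p - 1)}"

lemma W_card: "p \<ge> 1 \<Longrightarrow> card (W p c) \<le> 2 * p - 1"
  unfolding W_def by simp

lemma W_far: "p \<ge> 1 \<Longrightarrow> x \<notin> W p c \<Longrightarrow> \<bar>int x - int c\<bar> \<ge> int p"
  unfolding W_def by auto

lemma W_far': "p \<ge> 1 \<Longrightarrow> x \<notin> W p c \<Longrightarrow> \<bar>int c - int x\<bar> \<ge> int p"
  unfolding W_def by auto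

lemma star_choosable:
  fixes n p :: nat
  assumes "n \<ge> 3" and "p \<ge> 2"
  shows "total_choosable p (star_V n) (star_E n) (n + 2 * p - 1)"
  unfolding total_choosable_def
proof (intro allI impI)
  fix L :: "nat elem \<Rightarrow> nat set"
  assume HL: "\<forall>x\<in>elems (star_V n) (star_E n). finite (L x) \<and> card (L x) = n + 2 * p - 1"
  have LV: "finite (L (Vx v)) \<and> card (L (Vx v)) = n + 2 * p - 1" if "v \<le> n" for v
    using HL that by (auto simp: elems_def star_V_def)
  have LE: "finite (L (Ed {0,i})) \<and> card (L (Ed {0,i})) = n + 2 * p - 1" if "1 \<le> i" "i \<le> n" for i
    using HL that by (auto simp: elems_def star_E_def)
  have "L (Vx 0) \<noteq> {}" using LV[of 0] assms by auto
  then obtain c0 where c0: "c0 \<in> L (Vx 0)" by auto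
  define A where "A i = L (Ed {0,i}) - W p c0" for i
  have "\<forall>i\<in>{1..n}. finite (A i) \<and> card (A i) \<ge> n"
  proof
    fix i assume i: "i \<in> {1..n}"
    have "card (L (Ed {0,i})) - card (W p c0) \<le> card (A i)"
      unfolding A_def by (rule diff_card_le_card_Diff) (simp add: W_def)
    moreover have "card (W p c0) \<le> 2 * p - 1" using W_card assms by simp
    ultimately show "finite (A i) \<and> card (A i) \<ge> n" using LE[of i] i assms unfolding A_def by auto
  qed
  from greedy[OF this, of n] obtain f where f: "\<forall>i\<in>{1..n}. f i \<in> A i" "inj_on f {1..n}" by auto
  have leaf: "\<exists>y. y \<in> L (Vx i) \<and> y \<noteq> c0 \<and> y \<notin> W p (f i)" if "1 \<le> i" "i \<le> n" for i
  proof -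
    have "card (insert c0 (W p (f i))) \<le> Suc (card (W p (f i)))"
      by (simp add: card_insert_le_m1 W_def)
    moreover have "card (W p (f i)) \<le> 2 * p - 1" using W_card assms by simp
    ultimately have cc: "card (insert c0 (W p (f i))) < card (L (Vx i))" using LV[of i] that assms by auto
    have "\<not> L (Vx i) \<subseteq> insert c0 (W p (f i))"
    proof
      assume "L (Vx i) \<subseteq> insert c0 (W p (f i))"
      hence "card (L (Vx i)) \<le> card (insert c0 (W p (f i)))" by (intro card_mono) (auto simp: W_def)
      thus False using cc by simp
    qed
    thus ?thesis by auto
  qed
  define g where "g i = (SOME y. y \<in> L (Vx i) \<and> y \<noteq> c0 \<and> y \<notin> W p (f i))" for i
  have g: "g i \<in> L (Vx i) \<and> g i \<noteq> c0 \<and> g i \<notin> W p (f i)" if "1 \<le> i" "i \<le> n" for i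
    unfolding g_def using someI_ex[OF leaf[OF that]] .
  define c where "c x = (case x of Vx v \<Rightarrow> (if v = 0 then c0 else g v) | Ed e \<Rightarrow> f (Max e))" for x
  have Me: "Max {0, i} = (i::nat)" for i by (simp add: max_def)
  have fA: "f i \<in> L (Ed {0,i}) \<and> f i \<notin> W p c0" if "1 \<le> i" "i \<le> n" for i
    using f(1) that unfolding A_def by auto
  have p1: "p \<ge> 1" using assms by simp
  show "L_labelable p (star_V n) (star_E n) L"
    unfolding L_labelable_def
  proof (intro exI conjI)
    show "total_labelling p (star_V n) (star_E n) c"
      unfolding total_labelling_def
    proof (intro conjI allI impI ballI)
      fix u v assume "{u, v} \<in> star_E n"
      then obtain i where i: "1 \<le> i" "i \<le> n" "{u,v} = {0,i}" by (auto simp: star_E_def)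
      hence "(u = 0 \<and> v = i) \<or> (u = i \<and> v = 0)" by (auto simp: doubleton_eq_iff)
      thus "c (Vx u) \<noteq> c (Vx v)" using g[OF i(1,2)] i by (auto simp: c_def)
    next
      fix e e' assume e: "e \<in> star_E n" "e' \<in> star_E n" "e \<noteq> e' \<and> e \<inter> e' \<noteq> {}"
      then obtain i j where ij: "1 \<le> i" "i \<le> n" "e = {0,i}" "1 \<le> j" "j \<le> n" "e' = {0,j}"
        by (auto simp: star_E_def)
      have "i \<noteq> j" using ij e(3) by blast
      hence "f i \<noteq> f j" using ij by (intro inj_on_contraD[OF f(2)]) auto
      thus "c (Ed e) \<noteq> c (Ed e')" using ij by (simp add: c_def Me)
    next
      fix e u assume e: "e \<in> star_E n" "u \<in> e"
      then obtain i where i: "1 \<le> i" "i \<le> n" "e = {0,i}" by (auto simp: star_E_def)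
      then have "u = 0 \<or> u = i" using e by auto
      thus "int p \<le> \<bar>int (c (Vx u)) - int (c (Ed e))\<bar>"
        using i fA[OF i(1,2)] g[OF i(1,2)] W_far[OF p1] W_far'[OF p1]
        by (auto simp: c_def Me)
    qed
    show "\<forall>x\<in>elems (star_V n) (star_E n). c x \<in> L x"
    proof
      fix x assume "x \<in> elems (star_V n) (star_E n)"
      then consider v where "v \<le> n" "x = Vx v" | i where "1 \<le> i" "i \<le> n" "x = Ed {0,i}"
        by (auto simp: elems_def star_V_def star_E_def)
      thus "c x \<in> L x"
      proof cases
        case 1 thus ?thesis using c0 g[of v] by (cases "v = 0") (auto simp: c_def)
      next
        case 2 thus ?thesis using fA by (auto simp: c_def Me)
      qed
    qed
  qed
qed

theorem theorem3p1:
  fixes n p :: nat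
  assumes "n \<ge> 3" and "p \<ge> 2"
  shows "total_choosability p (star_V n) (star_E n) \<le> n + 2 * p - 1"
  unfolding total_choosability_def
  by (rule Least_le) (rule star_choosable[OF assms])

end
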